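(* Let $f$ be a homeomorphism of a compact, connected, separable metric space $\mathcal M$, and assume that $\mathcal M$ is not a chain-transitive set for $f$. If a CRH-attractor $A$ of $f$ and a CRH-repeller $R$ of $f$ have non-empty intersection, then $A=R$, and this set is a reversible core of $f$.
   Context: An $\varepsilon$-orbit of $f$ is a finite sequence $x_1,\dots,x_N$ with $\mathrm{dist}(f(x_j),x_{j+1})<\varepsilon$ for $j=1,\dots,N-1$; it connects $x_1$ to $x_N$. A closed invariant set $\Lambda$ is chain-transitive if for every $\varepsilon>0$ and all $x,y\in\Lambda$ there is an $\varepsilon$-orbit lying in $\Lambda$ connecting $x$ to $y$. A closed invariant set $A$ is stable if for every $\delta>0$ there is $\varepsilon>0$ such that no $\varepsilon$-orbit starting in $A$ leaves the $\delta$-neighbourhood of $A$. A CRH-attractor of $f$ is a closed invariant set that is chain-transitive and stable; a CRH-repeller of $f$ is a CRH-attractor of $f^{-1}$. A CRH-attractor $A$ is a dissipative attractor if there exists a point $x\notin A$ such that for every $\varepsilon>0$ some $\varepsilon$-orbit connects $x$ to a point of $A$; otherwise $A$ is called a reversible core. *)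

theory Defs
  imports "HOL-Analysis.Analysis"
begin

definition eps_orbit :: "('a::metric_space \<Rightarrow> 'a) \<Rightarrow> real \<Rightarrow> 'a list \<Rightarrow> bool" where
  "eps_orbit f e xs \<longleftrightarrow> xs \<noteq> [] \<and>
     (\<forall>j. Suc j < length xs \<longrightarrow> dist (f (xs ! j)) (xs ! Suc j) < e)"

definition invariant_set :: "('a \<Rightarrow> 'a) \<Rightarrow> 'a set \<Rightarrow> bool" where
  "invariant_set f A \<longleftrightarrow> f ` A = A"

definition chain_transitive :: "('a::metric_space \<Rightarrow> 'a) \<Rightarrow> 'a set \<Rightarrow> bool" where
  "chain_transitive f L \<longleftrightarrow> closed L \<and> invariant_set f L \<and>
     (\<forall>e>0. \<forall>x\<in>L. \<forall>y\<in>L. \<exists>xs. eps_orbit f e xs \<and> set xs \<subseteq> L \<and> hd xs = x \<and> last xs = y)"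

definition nbhd :: "'a::metric_space set \<Rightarrow> real \<Rightarrow> 'a set" where
  "nbhd A d = {x. \<exists>a\<in>A. dist x a < d}"

definition stable_set :: "('a::metric_space \<Rightarrow> 'a) \<Rightarrow> 'a set \<Rightarrow> bool" where
  "stable_set f A \<longleftrightarrow> closed A \<and> invariant_set f A \<and>
     (\<forall>d>0. \<exists>e>0. \<forall>xs. eps_orbit f e xs \<and> hd xs \<in> A \<longrightarrow> set xs \<subseteq> nbhd A d)"

definition crh_attractor :: "('a::metric_space \<Rightarrow> 'a) \<Rightarrow> 'a set \<Rightarrow> bool" where
  "crh_attractor f A \<longleftrightarrow> closed A \<and> invariant_set f A \<and> chain_transitive f A \<and> stable_set f A"

definition crh_repeller :: "('a::metric_space \<Rightarrow> 'a) \<Rightarrow> 'a set \<Rightarrow> bool" where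
  "crh_repeller f R \<longleftrightarrow> crh_attractor (inv f) R"

definition dissipative_attractor :: "('a::metric_space \<Rightarrow> 'a) \<Rightarrow> 'a set \<Rightarrow> bool" where
  "dissipative_attractor f A \<longleftrightarrow> crh_attractor f A \<and>
     (\<exists>x. x \<notin> A \<and> (\<forall>e>0. \<exists>xs. eps_orbit f e xs \<and> hd xs = x \<and> last xs \<in> A))"

definition reversible_core :: "('a::metric_space \<Rightarrow> 'a) \<Rightarrow> 'a set \<Rightarrow> bool" where
  "reversible_core f A \<longleftrightarrow> crh_attractor f A \<and> \<not> dissipative_attractor f A"

end

theory Submission
  imports Defs
begin

lemma reach_in:
  assumes st: "stable_set f A"
    and ch: "\<And>e. e > 0 \<Longrightarrow> \<exists>xs. eps_orbit f e xs \<and> hd xs \<in> A \<and> last xs = y"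
  shows "y \<in> A"
proof -
  have cl: "closed A" using st unfolding stable_set_def by blast
  have "y \<in> closure A"
    unfolding closure_approachable
  proof (intro allI impI)
    fix d :: real assume "d > 0"
    then obtain e where e: "e > 0" "\<forall>xs. eps_orbit f e xs \<and> hd xs \<in> A \<longrightarrow> set xs \<subseteq> nbhd A d"
      using st unfolding stable_set_def by blast
    obtain xs where xs: "eps_orbit f e xs" "hd xs \<in> A" "last xs = y" using ch[OF e(1)] by blast
    have "xs \<noteq> []" using xs(1) unfolding eps_orbit_def by blast
    hence "y \<in> set xs" using xs(3) by auto
    hence "y \<in> nbhd A d" using e(2) xs by blast
    thus "\<exists>a\<in>A. dist a y < d" unfolding nbhd_def by (auto simp: dist_commute)
  qed
  thus ?thesis using cl by simp
qed

lemma rev_orbit: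
  assumes uc: "\<And>u v. dist u v < d \<Longrightarrow> dist (g u) (g v) < e'"
    and gf: "\<And>x. g (f x) = x"
    and orb: "eps_orbit f d xs"
  shows "eps_orbit g e' (rev xs)"
  unfolding eps_orbit_def
proof (intro conjI allI impI)
  show "rev xs \<noteq> []" using orb unfolding eps_orbit_def by simp
next
  fix j assume j: "Suc j < length (rev xs)"
  define n where "n = length xs"
  define k where "k = n - 2 - j"
  have j': "Suc j < n" using j n_def by simp
  have r1: "rev xs ! j = xs ! Suc k" using j' unfolding k_def n_def
    by (simp add: rev_nth) (metis Suc_diff_Suc diff_Suc_eq_diff_pred numeral_2_eq_2 Suc_lessD)
  have r2: "rev xs ! Suc j = xs ! k" using j' unfolding k_def n_def
    by (simp add: rev_nth numeral_2_eq_2)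
  have "Suc k < length xs" using j' unfolding k_def n_def by simp
  hence "dist (f (xs ! k)) (xs ! Suc k) < d" using orb unfolding eps_orbit_def by blast
  hence "dist (g (f (xs ! k))) (g (xs ! Suc k)) < e'" by (rule uc)
  thus "dist (g (rev xs ! j)) (rev xs ! Suc j) < e'" using r1 r2 gf by (simp add: dist_commute)
qed

theorem theorem2:
  fixes f :: "'a::metric_space \<Rightarrow> 'a" and A R :: "'a set"
  assumes "compact (UNIV :: 'a set)"
    and "connected (UNIV :: 'a set)"
    and "\<exists>D::'a set. countable D \<and> closure D = UNIV"
    and "homeomorphism (UNIV :: 'a set) UNIV f (inv f)"
    and "\<not> chain_transitive f UNIV"
    and "crh_attractor f A"
    and "crh_repeller f R"
    and "A \<inter> R \<noteq> {}"
  shows "A = R \<and> reversible_core f A"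
proof -
  define g where "g = inv f"
  have hom: "homeomorphism UNIV UNIV f g" using assms(4) g_def by simp
  have gf: "\<And>x. g (f x) = x" and fg: "\<And>x. f (g x) = x"
    using hom unfolding homeomorphism_def by auto
  have ucf: "uniformly_continuous_on UNIV f" and ucg: "uniformly_continuous_on UNIV g"
    using hom assms(1) compact_uniformly_continuous unfolding homeomorphism_def by blast+
  have UG: "\<exists>d>0. \<forall>u v. dist u v < d \<longrightarrow> dist (g u) (g v) < e" if "e > 0" for e
    using ucg that unfolding uniformly_continuous_on_def by (metis UNIV_I dist_commute)
  have UF: "\<exists>d>0. \<forall>u v. dist u v < d \<longrightarrow> dist (f u) (f v) < e" if "e > 0" for e
    using ucf that unfolding uniformly_continuous_on_def by (metis UNIV_I dist_commute)
  have At: "stable_set f A" "chain_transitive f A"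
    using assms(6) unfolding crh_attractor_def by auto
  have Rt: "stable_set g R" "chain_transitive g R"
    using assms(7) unfolding crh_repeller_def crh_attractor_def g_def by auto
  obtain p where p: "p \<in> A" "p \<in> R" using assms(8) by blast
  have toR: "x \<in> R" if h: "\<And>e. e > 0 \<Longrightarrow> \<exists>xs. eps_orbit f e xs \<and> hd xs = x \<and> last xs \<in> R" for x
  proof (rule reach_in[OF Rt(1)])
    fix e :: real assume "e > 0"
    then obtain d where d: "d > 0" "\<forall>u v. dist u v < d \<longrightarrow> dist (g u) (g v) < e" using UG by blast
    obtain xs where xs: "eps_orbit f d xs" "hd xs = x" "last xs \<in> R" using h[OF d(1)] by blast
    have ne: "xs \<noteq> []" using xs(1) unfolding eps_orbit_def by blast
    have "eps_orbit g e (rev xs)" using rev_orbit[of d g e f xs] d(2) gf xs(1) by blast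
    moreover have "hd (rev xs) \<in> R" "last (rev xs) = x" using ne xs by (auto simp: hd_rev last_rev)
    ultimately show "\<exists>xs. eps_orbit g e xs \<and> hd xs \<in> R \<and> last xs = x" by blast
  qed
  have AR: "A \<subseteq> R"
  proof
    fix a assume a: "a \<in> A"
    show "a \<in> R"
    proof (rule toR)
      fix e :: real assume "e > 0"
      then obtain xs where "eps_orbit f e xs" "set xs \<subseteq> A" "hd xs = a" "last xs = p"
        using At(2) a p unfolding chain_transitive_def by blast
      thus "\<exists>xs. eps_orbit f e xs \<and> hd xs = a \<and> last xs \<in> R" using p by blast
    qed
  qed
  have RA: "R \<subseteq> A"
  proof
    fix r assume r: "r \<in> R"
    show "r \<in> A"
    proof (rule reach_in[OF At(1)])
      fix e :: real assume "e > 0"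
      then obtain d where d: "d > 0" "\<forall>u v. dist u v < d \<longrightarrow> dist (f u) (f v) < e" using UF by blast
      obtain xs where xs: "eps_orbit g d xs" "hd xs = r" "last xs = p"
        using Rt(2) r p d(1) unfolding chain_transitive_def by blast
      have ne: "xs \<noteq> []" using xs(1) unfolding eps_orbit_def by blast
      have "eps_orbit f e (rev xs)" using rev_orbit[of d f e g xs] d(2) fg xs(1) by blast
      moreover have "hd (rev xs) \<in> A" "last (rev xs) = r" using ne xs p by (auto simp: hd_rev last_rev)
      ultimately show "\<exists>xs. eps_orbit f e xs \<and> hd xs \<in> A \<and> last xs = r" by blast
    qed
  qed
  have eq: "A = R" using AR RA by blast
  have "\<not> dissipative_attractor f A"
    unfolding dissipative_attractor_def using toR eq by blast
  thus ?thesis using eq assms(6) unfolding reversible_core_def by blast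
qed

end
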